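(* Let $X$ be a smooth projective complex variety with $\operatorname{Pic}(X)$ finitely generated, and let $G$ be a finite group acting on $\operatorname{Pic}(X)$ by group automorphisms such that $\chi(gD)=\chi(D)$ for all $g\in G$ and $[D]\in\operatorname{Pic}(X)$. Then there exists a finite set $S\subset\operatorname{Pic}(X)$ such that \[ \operatorname{Pic}^\chi(X,G)=\left\langle \chi(D)\langle D\rangle_G \;\middle|\; [D]\in S\right\rangle . \]
   Context: $\chi(D)$ denotes the Euler–Poincaré characteristic of the line bundle $\mathcal{O}_X(D)$. For $[D]\in\operatorname{Pic}(X)$, $\langle D\rangle_G:=\sum_{[E]\in G\cdot[D]}[E]$ is the sum over the $G$-orbit of $[D]$. $\operatorname{Pic}^\chi(X,G)$ is the subgroup of $\operatorname{Pic}(X)$ generated by $\chi(D)\langle D\rangle_G$ for all $[D]\in\operatorname{Pic}(X)$. *)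

theory Defs
  imports "HOL-Algebra.Group"
begin

inductive_set gen_subgroup :: "'p::ab_group_add set \<Rightarrow> 'p set" for A where
  gen_zero: "0 \<in> gen_subgroup A"
| gen_base: "a \<in> A \<Longrightarrow> a \<in> gen_subgroup A"
| gen_add: "x \<in> gen_subgroup A \<Longrightarrow> y \<in> gen_subgroup A \<Longrightarrow> x + y \<in> gen_subgroup A"
| gen_neg: "x \<in> gen_subgroup A \<Longrightarrow> - x \<in> gen_subgroup A"

definition zmul :: "int \<Rightarrow> 'p::ab_group_add \<Rightarrow> 'p" where
  "zmul n x = (if 0 \<le> n then (\<Sum>_\<in>{..<nat n}. x) else - (\<Sum>_\<in>{..<nat (- n)}. x))"

definition additive_action :: "('g, 'b) monoid_scheme \<Rightarrow> ('g \<Rightarrow> 'p::ab_group_add \<Rightarrow> 'p) \<Rightarrow> bool" where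
  "additive_action G act \<longleftrightarrow>
     act \<one>\<^bsub>G\<^esub> = id \<and>
     (\<forall>g\<in>carrier G. \<forall>h\<in>carrier G. act (g \<otimes>\<^bsub>G\<^esub> h) = act g \<circ> act h) \<and>
     (\<forall>g\<in>carrier G. \<forall>x y. act g (x + y) = act g x + act g y)"

definition orbit_sum :: "('g, 'b) monoid_scheme \<Rightarrow> ('g \<Rightarrow> 'p::ab_group_add \<Rightarrow> 'p) \<Rightarrow> 'p \<Rightarrow> 'p" where
  "orbit_sum G act D = (\<Sum>E\<in>(\<lambda>g. act g D) ` carrier G. E)"

definition Pic_chi :: "('g, 'b) monoid_scheme \<Rightarrow> ('g \<Rightarrow> 'p::ab_group_add \<Rightarrow> 'p) \<Rightarrow> ('p \<Rightarrow> int) \<Rightarrow> 'p set" where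
  "Pic_chi G act \<chi> = gen_subgroup {zmul (\<chi> D) (orbit_sum G act D) | D. True}"

end

theory Submission
  imports Defs
begin

definition subgrp :: "'p::ab_group_add set \<Rightarrow> bool" where
  "subgrp H \<longleftrightarrow> 0 \<in> H \<and> (\<forall>x\<in>H. \<forall>y\<in>H. x + y \<in> H) \<and> (\<forall>x\<in>H. - x \<in> H)"

lemma subgrp_diff: "subgrp H \<Longrightarrow> x \<in> H \<Longrightarrow> y \<in> H \<Longrightarrow> x - y \<in> H"
  unfolding subgrp_def diff_conv_add_uminus by blast

lemma subgrp_add: "subgrp H \<Longrightarrow> x \<in> H \<Longrightarrow> y \<in> H \<Longrightarrow> x + y \<in> H"
  unfolding subgrp_def by blast

lemma subgrp_0: "subgrp H \<Longrightarrow> 0 \<in> H"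
  unfolding subgrp_def by blast

lemma gen_subgrp: "subgrp (gen_subgroup A)"
  unfolding subgrp_def by (auto intro: gen_subgroup.intros)

lemma gen_least: assumes "subgrp H" "A \<subseteq> H" shows "gen_subgroup A \<subseteq> H"
proof
  fix x assume "x \<in> gen_subgroup A"
  then show "x \<in> H" using assms by (induction x rule: gen_subgroup.induct) (auto simp: subgrp_def)
qed

lemma gen_mono: "A \<subseteq> B \<Longrightarrow> gen_subgroup A \<subseteq> gen_subgroup B"
  by (meson gen_least gen_subgrp gen_subgroup.gen_base subset_iff)

lemma zmul_0[simp]: "zmul 0 x = 0" by (simp add: zmul_def)

lemma zmul_plus1: "zmul (k + 1) x = zmul k x + x"
proof (cases "k \<ge> 0")
  case True
  then obtain n where k: "k = int n" by (metis nonneg_eq_int)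
  have "nat (int n + 1) = Suc n" by simp
  then show ?thesis using k by (simp add: zmul_def)
next
  case False
  define n where "n = nat (- k - 1)"
  have k: "k = - int (Suc n)" using False by (simp add: n_def)
  have nk: "nat (- k) = Suc n" using k by simp
  have e1: "zmul k x = - ((\<Sum>_\<in>{..<n}. x) + x)" using False by (simp add: zmul_def nk)
  have k1: "k + 1 = - int n" using k by simp
  have e2: "zmul (k + 1) x = - (\<Sum>_\<in>{..<n}. x)"
    unfolding k1 by (cases "n = 0") (simp_all add: zmul_def)
  show ?thesis unfolding e1 e2 by simp
qed

lemma zmul_minus1: "zmul (k - 1) x = zmul k x - x"
  using zmul_plus1[of "k - 1" x] by simp

lemma zmul_1[simp]: "zmul 1 x = x" using zmul_plus1[of 0 x] by simp

lemma zmul_uminus: "zmul (- k) x = - zmul k x"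
  by (cases "k = 0") (auto simp: zmul_def)

lemma zmul_add: "zmul (a + b) x = zmul a x + zmul b x"
proof (induction b rule: int_induct[of _ 0])
  case base then show ?case by simp
next
  case (step1 i)
  have "zmul (a + (i + 1)) x = zmul (a + i) x + x" using zmul_plus1[of "a + i" x] by (simp add: add.assoc)
  then show ?case using step1.IH zmul_plus1[of i x] by (simp add: add.assoc)
next
  case (step2 i)
  have "zmul (a + (i - 1)) x = zmul (a + i) x - x" using zmul_minus1[of "a + i" x] by (simp add: add_diff_eq)
  then show ?case using step2.IH zmul_minus1[of i x] by (simp add: diff_add_eq)
qed

lemma zmul_mult: "zmul (a * b) x = zmul a (zmul b x)"
proof (induction a rule: int_induct[of _ 0])
  case base then show ?case by simp
next
  case (step1 i)
  have "(i + 1) * b = i * b + b" by (simp add: distrib_right)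
  then have "zmul ((i + 1) * b) x = zmul (i * b) x + zmul b x" by (simp add: zmul_add)
  then show ?case using step1.IH zmul_plus1[of i "zmul b x"] by simp
next
  case (step2 i)
  have "(i - 1) * b = i * b + (- b)" by (simp add: left_diff_distrib)
  moreover have "zmul (i * b + (- b)) x = zmul (i * b) x - zmul b x"
    by (simp only: zmul_add zmul_uminus) simp
  ultimately have "zmul ((i - 1) * b) x = zmul (i * b) x - zmul b x" by simp
  then show ?case using step2.IH zmul_minus1[of i "zmul b x"] by simp
qed

lemma zmul_distrib: "zmul k (x + y) = zmul k x + zmul k y"
proof (induction k rule: int_induct[of _ 0])
  case base then show ?case by simp
next
  case (step1 i) then show ?case
    unfolding zmul_plus1 by (simp add: ac_simps)
next
  case (step2 i) then show ?case
    unfolding zmul_minus1 by (simp add: diff_add_eq add_diff_eq ac_simps)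
qed

lemma zmul_in: assumes "subgrp H" "x \<in> H" shows "zmul k x \<in> H"
proof (induction k rule: int_induct[of _ 0])
  case base then show ?case using subgrp_0[OF assms(1)] by simp
next
  case (step1 i) then show ?case
    unfolding zmul_plus1 using subgrp_add[OF assms(1) _ assms(2)] by blast
next
  case (step2 i) then show ?case
    unfolding zmul_minus1 using subgrp_diff[OF assms(1) _ assms(2)] by blast
qed

lemma zmul_int: "zmul k (d::int) = k * d"
proof (induction k rule: int_induct[of _ 0])
  case base then show ?case by simp
next
  case (step1 i) then show ?case
    unfolding zmul_plus1 by (simp add: distrib_right)
next
  case (step2 i) then show ?case
    unfolding zmul_minus1 by (simp add: left_diff_distrib)
qed

lemma int_subgrp_cyclic:
  fixes I :: "int set"
  assumes "subgrp I"
  shows "\<exists>d. I = range (\<lambda>m. m * d)"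
proof (cases "I \<subseteq> {0}")
  case True
  then have "I = {0}" using assms by (auto simp: subgrp_def)
  then show ?thesis by (intro exI[of _ 0]) auto
next
  case False
  then obtain a where a: "a \<in> I" "a \<noteq> 0" by auto
  have "\<exists>p. p \<in> I \<and> p > 0"
  proof (cases "a > 0")
    case True then show ?thesis using a by auto
  next
    case False then show ?thesis using a assms
      by (intro exI[of _ "-a"]) (auto simp: subgrp_def)
  qed
  then obtain p0 where p0: "p0 \<in> I" "p0 > 0" by blast
  define P where "P = (\<lambda>n::nat. n > 0 \<and> int n \<in> I)"
  have Pex: "P (nat p0)" using p0 unfolding P_def by simp
  define n0 where "n0 = (LEAST n. P n)"
  have "P n0" unfolding n0_def by (rule LeastI[of P, OF Pex])
  define d where "d = int n0"
  have dI: "d \<in> I" "d > 0" using \<open>P n0\<close> unfolding P_def d_def by auto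
  have dmin: "d \<le> q" if "q \<in> I" "q > 0" for q
  proof -
    have "P (nat q)" using that unfolding P_def by simp
    then have "n0 \<le> nat q" unfolding n0_def by (rule Least_le)
    then show ?thesis using that unfolding d_def by simp
  qed
  have mul: "m * d \<in> I" for m using zmul_in[OF assms dI(1), of m] zmul_int by simp
  have "I = range (\<lambda>m. m * d)"
  proof
    show "range (\<lambda>m. m * d) \<subseteq> I" using mul by auto
  next
    show "I \<subseteq> range (\<lambda>m. m * d)"
    proof
      fix k assume k: "k \<in> I"
      have "k mod d = k + (- (k div d) * d)" by (simp add: minus_div_mult_eq_mod)
      moreover have "k + (- (k div d) * d) \<in> I" using k mul[of "- (k div d)"] assms unfolding subgrp_def by blast
      ultimately have km: "k mod d \<in> I" by simp
      have "k mod d = 0"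
      proof (rule ccontr)
        assume "k mod d \<noteq> 0"
        then have "k mod d > 0" using dI by (simp add: order_le_neq_trans)
        then have "d \<le> k mod d" using km dmin by blast
        moreover have "k mod d < d" using dI by simp
        ultimately show False by simp
      qed
      then have "k = (k div d) * d" using div_mult_mod_eq[of k d] by simp
      then show "k \<in> range (\<lambda>m. m * d)" by blast
    qed
  qed
  then show ?thesis by blast
qed

lemma gen_insert_repr:
  "y \<in> gen_subgroup (insert f F) \<Longrightarrow> \<exists>x\<in>gen_subgroup F. \<exists>k. y = x + zmul k f"
proof (induction y rule: gen_subgroup.induct)
  case gen_zero
  have "(0::'a) = 0 + zmul 0 f" by simp
  then show ?case using gen_subgroup.gen_zero by blast
next
  case (gen_base a) then show ?case
  proof
    assume "a = f"
    then have "a = 0 + zmul 1 f" by simp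
    then show ?thesis using gen_subgroup.gen_zero by blast
  next
    assume "a \<in> F"
    then have "a \<in> gen_subgroup F" by (rule gen_subgroup.gen_base)
    moreover have "a = a + zmul 0 f" by simp
    ultimately show ?thesis by blast
  qed
next
  case (gen_add x y)
  then obtain x1 k1 x2 k2 where "x1 \<in> gen_subgroup F" "x = x1 + zmul k1 f"
    "x2 \<in> gen_subgroup F" "y = x2 + zmul k2 f" by blast
  moreover have "x1 + x2 \<in> gen_subgroup F" using calculation gen_subgroup.gen_add by blast
  moreover have "(x1 + zmul k1 f) + (x2 + zmul k2 f) = (x1 + x2) + zmul (k1 + k2) f"
    by (simp add: zmul_add ac_simps)
  ultimately show ?case by metis
next
  case (gen_neg x)
  then obtain x1 k1 where "x1 \<in> gen_subgroup F" "x = x1 + zmul k1 f" by blast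
  moreover have "- x1 \<in> gen_subgroup F" using calculation gen_subgroup.gen_neg by blast
  moreover have "- (x1 + zmul k1 f) = (- x1) + zmul (- k1) f"
    by (simp add: zmul_uminus)
  ultimately show ?case by metis
qed

lemma noeth:
  assumes "finite F"
  shows "subgrp H \<Longrightarrow> H \<subseteq> gen_subgroup F \<Longrightarrow> \<exists>T. finite T \<and> T \<subseteq> H \<and> gen_subgroup T = H"
  using assms
proof (induction F arbitrary: H rule: finite_induct)
  case empty
  have "gen_subgroup {} \<subseteq> {0::'a}" by (rule gen_least) (auto simp: subgrp_def)
  then have "H = {0}" using empty by (auto simp: subgrp_def)
  moreover have "gen_subgroup {} = {0::'a}" using \<open>gen_subgroup {} \<subseteq> {0}\<close> gen_subgroup.gen_zero by blast
  ultimately show ?case by (intro exI[of _ "{}"]) auto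
next
  case (insert f F)
  define H' where "H' = H \<inter> gen_subgroup F"
  have "subgrp H'" using insert.prems(1) gen_subgrp[of F] unfolding H'_def subgrp_def by auto
  then obtain T' where T': "finite T'" "T' \<subseteq> H'" "gen_subgroup T' = H'"
    using insert.IH[of H'] H'_def by auto
  define I where "I = {k. \<exists>x\<in>gen_subgroup F. x + zmul k f \<in> H}"
  have "subgrp I"
    unfolding subgrp_def
  proof (intro conjI ballI)
    show "0 \<in> I" unfolding I_def using insert.prems(1) gen_subgroup.gen_zero
      by (auto simp: subgrp_def)
  next
    fix a b assume "a \<in> I" "b \<in> I"
    then obtain x y where "x \<in> gen_subgroup F" "x + zmul a f \<in> H" "y \<in> gen_subgroup F" "y + zmul b f \<in> H"
      unfolding I_def by blast
    have "(x + zmul a f) + (y + zmul b f) \<in> H" using insert.prems(1) \<open>x + zmul a f \<in> H\<close> \<open>y + zmul b f \<in> H\<close>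
      unfolding subgrp_def by blast
    moreover have "(x + zmul a f) + (y + zmul b f) = (x + y) + zmul (a + b) f"
      by (simp add: zmul_add ac_simps)
    moreover have "x + y \<in> gen_subgroup F" using \<open>x \<in> gen_subgroup F\<close> \<open>y \<in> gen_subgroup F\<close>
      by (rule gen_subgroup.gen_add)
    ultimately show "a + b \<in> I" unfolding I_def by auto
  next
    fix a assume "a \<in> I"
    then obtain x where "x \<in> gen_subgroup F" "x + zmul a f \<in> H"
      unfolding I_def by blast
    have "- (x + zmul a f) \<in> H" using insert.prems(1) \<open>x + zmul a f \<in> H\<close>
      unfolding subgrp_def by blast
    moreover have eq: "- (x + zmul a f) = (- x) + zmul (- a) f"
      by (simp add: zmul_uminus)
    ultimately have "(- x) + zmul (- a) f \<in> H" by (simp only: eq)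
    moreover have "- x \<in> gen_subgroup F" using \<open>x \<in> gen_subgroup F\<close>
      by (rule gen_subgroup.gen_neg)
    ultimately show "- a \<in> I" unfolding I_def by blast
  qed
  then obtain d where d: "I = range (\<lambda>m. m * d)" using int_subgrp_cyclic by blast
  then have "d \<in> I" using rangeI[of "\<lambda>m. m * d" 1] by simp
  then obtain x0 where x0: "x0 \<in> gen_subgroup F" "x0 + zmul d f \<in> H" unfolding I_def by blast
  define h0 where "h0 = x0 + zmul d f"
  define T where "T = insert h0 T'"
  have TH: "T \<subseteq> H" using T' x0 h0_def H'_def T_def by auto
  have "gen_subgroup T = H"
  proof
    show "gen_subgroup T \<subseteq> H" by (rule gen_least[OF insert.prems(1) TH])
  next
    show "H \<subseteq> gen_subgroup T"
    proof
      fix h assume h: "h \<in> H"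
      then obtain x k where x: "x \<in> gen_subgroup F" "h = x + zmul k f"
        using gen_insert_repr insert.prems(2) by blast
      then have "k \<in> I" unfolding I_def using h by blast
      then obtain m where m: "k = m * d" using d by blast
      have eq: "h - zmul m h0 = x - zmul m x0"
        using x m by (simp add: h0_def zmul_distrib zmul_mult)
      have "h0 \<in> H" using TH T_def by auto
      then have "zmul m h0 \<in> H" by (rule zmul_in[OF insert.prems(1)])
      then have "h - zmul m h0 \<in> H" using h insert.prems(1) subgrp_diff by blast
      moreover have "zmul m x0 \<in> gen_subgroup F" using x0(1) by (rule zmul_in[OF gen_subgrp])
      then have "x - zmul m x0 \<in> gen_subgroup F"
        using x(1) subgrp_diff[OF gen_subgrp] by blast
      ultimately have "h - zmul m h0 \<in> gen_subgroup T'" using T' H'_def eq by auto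
      then have A: "h - zmul m h0 \<in> gen_subgroup T" using gen_mono[of T' T] T_def by auto
      have "h0 \<in> gen_subgroup T" unfolding T_def by (rule gen_subgroup.gen_base) simp
      then have B: "zmul m h0 \<in> gen_subgroup T" by (rule zmul_in[OF gen_subgrp])
      have "h = (h - zmul m h0) + zmul m h0" by simp
      moreover have "(h - zmul m h0) + zmul m h0 \<in> gen_subgroup T" using A B by (rule gen_subgroup.gen_add)
      ultimately show "h \<in> gen_subgroup T" by simp
    qed
  qed
  then show ?case using TH T' T_def by auto
qed

lemma fin_gen:
  "x \<in> gen_subgroup (f ` U) \<Longrightarrow> \<exists>S \<subseteq> U. finite S \<and> x \<in> gen_subgroup (f ` S)"
proof (induction x rule: gen_subgroup.induct)
  case gen_zero
  have "(0::'a) \<in> gen_subgroup (f ` {})" by (rule gen_subgroup.gen_zero)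
  then show ?case by blast
next
  case (gen_base a)
  then obtain u where "u \<in> U" "a = f u" by auto
  moreover have "f u \<in> gen_subgroup (f ` {u})" by (rule gen_subgroup.gen_base) simp
  ultimately show ?case by (intro exI[of _ "{u}"]) simp
next
  case (gen_add x y)
  then obtain S1 S2 where "S1 \<subseteq> U" "finite S1" "x \<in> gen_subgroup (f ` S1)"
    "S2 \<subseteq> U" "finite S2" "y \<in> gen_subgroup (f ` S2)" by blast
  moreover have "gen_subgroup (f ` S1) \<subseteq> gen_subgroup (f ` (S1 \<union> S2))" by (rule gen_mono) auto
  moreover have "gen_subgroup (f ` S2) \<subseteq> gen_subgroup (f ` (S1 \<union> S2))" by (rule gen_mono) auto
  ultimately have "S1 \<union> S2 \<subseteq> U" "finite (S1 \<union> S2)" "x + y \<in> gen_subgroup (f ` (S1 \<union> S2))"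
    using gen_subgroup.gen_add by blast+
  then show ?case by blast
next
  case (gen_neg x)
  then obtain S where "S \<subseteq> U" "finite S" "x \<in> gen_subgroup (f ` S)" by blast
  moreover from this(3) have "- x \<in> gen_subgroup (f ` S)" by (rule gen_subgroup.gen_neg)
  ultimately show ?case by blast
qed

lemma fin_gen_set:
  assumes "finite T"
  shows "T \<subseteq> gen_subgroup (f ` U) \<Longrightarrow> \<exists>S \<subseteq> U. finite S \<and> T \<subseteq> gen_subgroup (f ` S)"
  using assms
proof (induction T rule: finite_induct)
  case empty
  have "{} \<subseteq> U" "finite {}" "{} \<subseteq> gen_subgroup (f ` {})" by simp_all
  then show ?case by blast
next
  case (insert t T)
  from insert.prems have "T \<subseteq> gen_subgroup (f ` U)" by simp
  then obtain S1 where S1: "S1 \<subseteq> U" "finite S1" "T \<subseteq> gen_subgroup (f ` S1)" using insert.IH by blast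
  from insert.prems have "t \<in> gen_subgroup (f ` U)" by simp
  then obtain S2 where S2: "S2 \<subseteq> U" "finite S2" "t \<in> gen_subgroup (f ` S2)" using fin_gen by blast
  have m1: "gen_subgroup (f ` S1) \<subseteq> gen_subgroup (f ` (S1 \<union> S2))" by (rule gen_mono) blast
  have m2: "gen_subgroup (f ` S2) \<subseteq> gen_subgroup (f ` (S1 \<union> S2))" by (rule gen_mono) blast
  have "S1 \<union> S2 \<subseteq> U" "finite (S1 \<union> S2)" "insert t T \<subseteq> gen_subgroup (f ` (S1 \<union> S2))"
    using S1 S2 m1 m2 by blast+
  then show ?case by blast
qed

theorem theorem5p4:
  fixes G :: "('g, 'b) monoid_scheme"
    and act :: "'g \<Rightarrow> 'p::ab_group_add \<Rightarrow> 'p"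
    and \<chi> :: "'p \<Rightarrow> int"
  assumes fg: "\<exists>F. finite F \<and> gen_subgroup F = (UNIV :: 'p set)"
    and grp: "group G" and fin: "finite (carrier G)"
    and act: "additive_action G act"
    and inv: "\<And>g D. g \<in> carrier G \<Longrightarrow> \<chi> (act g D) = \<chi> D"
  shows "\<exists>S. finite S \<and>
           Pic_chi G act \<chi> = gen_subgroup {zmul (\<chi> D) (orbit_sum G act D) | D. D \<in> S}"
proof -
  define f where "f D = zmul (\<chi> D) (orbit_sum G act D)" for D
  have setS: "{zmul (\<chi> D) (orbit_sum G act D) | D. D \<in> S} = f ` S" for S
    unfolding f_def by auto
  have P: "Pic_chi G act \<chi> = gen_subgroup (f ` UNIV)"
    unfolding Pic_chi_def f_def by (rule arg_cong[where f=gen_subgroup]) auto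
  obtain F where F: "finite F" "gen_subgroup F = (UNIV :: 'p set)" using fg by blast
  have "gen_subgroup (f ` UNIV) \<subseteq> gen_subgroup F" using F(2) by simp
  then have "\<exists>T. finite T \<and> T \<subseteq> gen_subgroup (f ` UNIV) \<and> gen_subgroup T = gen_subgroup (f ` UNIV)"
    by (rule noeth[OF F(1) gen_subgrp])
  then obtain T where T: "finite T" "T \<subseteq> gen_subgroup (f ` UNIV)" "gen_subgroup T = gen_subgroup (f ` UNIV)"
    by blast
  obtain S where S: "finite S" "T \<subseteq> gen_subgroup (f ` S)" using fin_gen_set[OF T(1) T(2)] by blast
  have "gen_subgroup (f ` UNIV) \<subseteq> gen_subgroup (f ` S)"
    using T(3) gen_least[OF gen_subgrp S(2)] by simp
  moreover have "gen_subgroup (f ` S) \<subseteq> gen_subgroup (f ` UNIV)" by (rule gen_mono) auto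
  ultimately have eq: "gen_subgroup (f ` S) = gen_subgroup (f ` UNIV)" by (rule antisym[rotated])
  have "Pic_chi G act \<chi> = gen_subgroup {zmul (\<chi> D) (orbit_sum G act D) | D. D \<in> S}"
    unfolding setS P eq ..
  then show ?thesis using S(1) by blast
qed

end
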